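(* Let $G$ be a group generated by the conjugacy class $x^G$ of an element $x\in G$, and assume that the conjugation action of $x$ on $x^G$ (the permutation $y\mapsto xyx^{-1}$) has finite order $m$. Then for every $r\in\mathbb{N}$ with $\gcd(r,m)=1$, the conjugacy class $(x^r)^G$ of $x^r$ has the same cardinality as $x^G$. *)

theory Defs
  imports "HOL-Algebra.Algebra" "HOL-Library.Equipollence"
begin

definition conj_class :: "('a, 'b) monoid_scheme \<Rightarrow> 'a \<Rightarrow> 'a set" where
  "conj_class G x = {g \<otimes>\<^bsub>G\<^esub> x \<otimes>\<^bsub>G\<^esub> inv\<^bsub>G\<^esub> g | g. g \<in> carrier G}"

definition conj_by :: "('a, 'b) monoid_scheme \<Rightarrow> 'a \<Rightarrow> 'a \<Rightarrow> 'a" where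
  "conj_by G x = (\<lambda>y. x \<otimes>\<^bsub>G\<^esub> y \<otimes>\<^bsub>G\<^esub> inv\<^bsub>G\<^esub> x)"

definition conj_action_order :: "('a, 'b) monoid_scheme \<Rightarrow> 'a \<Rightarrow> nat \<Rightarrow> bool" where
  "conj_action_order G x m \<longleftrightarrow>
     0 < m \<and> (\<forall>y \<in> conj_class G x. (conj_by G x ^^ m) y = y) \<and>
     (\<forall>k. 0 < k \<and> k < m \<longrightarrow> (\<exists>y \<in> conj_class G x. (conj_by G x ^^ k) y \<noteq> y))"

end

theory Submission
  imports Defs
begin

lemma (in group) conj_pow:
  assumes "g \<in> carrier G" "x \<in> carrier G"
  shows "(g \<otimes> x \<otimes> inv g) [^] (n::nat) = g \<otimes> x [^] n \<otimes> inv g"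
proof (induction n)
  case 0 then show ?case using assms by (simp add: r_inv)
next
  case (Suc n)
  have "(g \<otimes> x \<otimes> inv g) [^] Suc n = (g \<otimes> x [^] n \<otimes> inv g) \<otimes> (g \<otimes> x \<otimes> inv g)"
    using Suc by simp
  also have "\<dots> = g \<otimes> (x [^] n \<otimes> (inv g \<otimes> g) \<otimes> x) \<otimes> inv g"
    using assms by (simp only: m_assoc inv_closed nat_pow_closed m_closed)
  also have "\<dots> = g \<otimes> (x [^] n \<otimes> x) \<otimes> inv g"
    using assms by simp
  finally show ?case by simp
qed

lemma (in group) conj_by_iter:
  assumes "x \<in> carrier G" "y \<in> carrier G"
  shows "(conj_by G x ^^ n) y = x [^] (n::nat) \<otimes> y \<otimes> inv (x [^] n)"
proof (induction n)
  case 0 then show ?case using assms by simp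
next
  case (Suc n)
  have "(conj_by G x ^^ Suc n) y = x \<otimes> (x [^] n \<otimes> y \<otimes> inv (x [^] n)) \<otimes> inv x"
    using Suc by (simp add: conj_by_def)
  also have "\<dots> = (x \<otimes> x [^] n) \<otimes> y \<otimes> (inv (x [^] n) \<otimes> inv x)"
    using assms by (simp add: m_assoc)
  also have "\<dots> = x [^] Suc n \<otimes> y \<otimes> inv (x [^] Suc n)"
    using assms by (simp only: inv_mult_group[symmetric] nat_pow_Suc2 nat_pow_closed)
  finally show ?case .
qed

lemma (in group) conj_class_sub: "x \<in> carrier G \<Longrightarrow> conj_class G x \<subseteq> carrier G"
  unfolding conj_class_def by auto

lemma (in group) central_of_gen:
  assumes "x \<in> carrier G" "generate G (conj_class G x) = carrier G"
    and "c \<in> carrier G" and "\<forall>y \<in> conj_class G x. c \<otimes> y = y \<otimes> c"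
    and "g \<in> carrier G"
  shows "c \<otimes> g = g \<otimes> c"
proof -
  let ?H = "{h \<in> carrier G. c \<otimes> h = h \<otimes> c}"
  have sg: "subgroup ?H G"
  proof
    show "?H \<subseteq> carrier G" by auto
    show "\<one> \<in> ?H" using assms by simp
  next
    fix a b assume "a \<in> ?H" "b \<in> ?H"
    then show "a \<otimes> b \<in> ?H" using assms(3)
      by (auto simp: m_assoc[symmetric]) (simp add: m_assoc)
  next
    fix a assume a: "a \<in> ?H"
    then have ac: "a \<in> carrier G" "c \<otimes> a = a \<otimes> c" by auto
    have "c \<otimes> inv a = inv a \<otimes> (a \<otimes> c) \<otimes> inv a"
      using ac(1) assms(3) by (simp add: m_assoc[symmetric])
    also have "\<dots> = inv a \<otimes> (c \<otimes> a) \<otimes> inv a" using ac by simp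
    also have "\<dots> = inv a \<otimes> c" using ac(1) assms(3) by (simp add: m_assoc)
    finally show "inv a \<in> ?H" using ac by simp
  qed
  have "conj_class G x \<subseteq> ?H" using assms conj_class_sub by auto
  then have "generate G (conj_class G x) \<subseteq> ?H" using generate_subgroup_incl sg by blast
  then show ?thesis using assms by auto
qed

theorem mainTheorem6:
  fixes G (structure) and x :: 'a and m r :: nat
  assumes "group G"
    and "x \<in> carrier G"
    and "generate G (conj_class G x) = carrier G"
    and "conj_action_order G x m"
    and "coprime r m"
  shows "conj_class G (x [^] r) \<approx> conj_class G x"
proof -
  interpret group G by fact
  note x = assms(2)
  have m0: "m > 0" and fix_m: "\<forall>y \<in> conj_class G x. (conj_by G x ^^ m) y = y"
    using assms(4) unfolding conj_action_order_def by auto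
  have comm: "\<forall>y \<in> conj_class G x. x [^] m \<otimes> y = y \<otimes> x [^] m"
  proof
    fix y assume y: "y \<in> conj_class G x"
    then have yc: "y \<in> carrier G" using conj_class_sub x by auto
    have "x [^] m \<otimes> y \<otimes> inv (x [^] m) = y" using fix_m y conj_by_iter[OF x yc] by auto
    then have "x [^] m \<otimes> y \<otimes> inv (x [^] m) \<otimes> x [^] m = y \<otimes> x [^] m" by simp
    then show "x [^] m \<otimes> y = y \<otimes> x [^] m" using x yc by (simp add: m_assoc)
  qed
  have central: "\<And>g n. g \<in> carrier G \<Longrightarrow> x [^] (m * n) \<otimes> g = g \<otimes> x [^] (m * n)"
  proof -
    fix g n assume g: "g \<in> carrier G"
    have c: "x [^] m \<otimes> g = g \<otimes> x [^] m" using central_of_gen[OF x assms(3) _ comm g] x by simp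
    show "x [^] (m * n) \<otimes> g = g \<otimes> x [^] (m * n)"
    proof (induction n)
      case 0 then show ?case using g by simp
    next
      case (Suc n)
      have e: "x [^] (m * Suc n) = x [^] (m * n) \<otimes> x [^] m" using x by (simp add: nat_pow_mult add.commute)
      show ?case unfolding e using Suc c x g
        by (simp add: m_assoc) (metis Suc g m_assoc nat_pow_closed x)
    qed
  qed
  have surj: "(\<lambda>y. y [^] r) ` conj_class G x = conj_class G (x [^] r)"
  proof
    show "(\<lambda>y. y [^] r) ` conj_class G x \<subseteq> conj_class G (x [^] r)"
      unfolding conj_class_def using conj_pow x by auto
    show "conj_class G (x [^] r) \<subseteq> (\<lambda>y. y [^] r) ` conj_class G x"
    proof
      fix w assume "w \<in> conj_class G (x [^] r)"
      then obtain g where g: "g \<in> carrier G" and w: "w = g \<otimes> x [^] r \<otimes> inv g"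
        unfolding conj_class_def by auto
      have "g \<otimes> x \<otimes> inv g \<in> conj_class G x" unfolding conj_class_def using g by auto
      moreover have "w = (g \<otimes> x \<otimes> inv g) [^] r" using conj_pow[OF g x] w by simp
      ultimately show "w \<in> (\<lambda>y. y [^] r) ` conj_class G x" by blast
    qed
  qed
  have inj: "inj_on (\<lambda>y. y [^] r) (conj_class G x)"
  proof (cases "m = 1")
    case True
    have "conj_class G x = {x}"
    proof -
      have "\<And>g. g \<in> carrier G \<Longrightarrow> g \<otimes> x \<otimes> inv g = x"
      proof -
        fix g assume g: "g \<in> carrier G"
        have "x \<otimes> g = g \<otimes> x" using central[OF g, of 1] True x by simp
        then have "g \<otimes> x \<otimes> inv g = x \<otimes> g \<otimes> inv g" by simp
        also have "\<dots> = x" using g x by (simp add: m_assoc)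
        finally show "g \<otimes> x \<otimes> inv g = x" .
      qed
      then show ?thesis unfolding conj_class_def using x by force
    qed
    then show ?thesis by simp
  next
    case False
    with m0 have m1: "m > 1" by simp
    have r0: "r \<noteq> 0"
    proof
      assume "r = 0"
      then have "gcd r m = m" by simp
      moreover have "gcd r m = 1" using assms(5) by simp
      ultimately show False using m1 by simp
    qed
    obtain s k where "r * s = m * k + gcd r m" using bezout_nat[OF r0] by blast
    then have rs': "r * s = 1 + m * k" using assms(5) by simp
    let ?z = "x [^] (m * k)"
    have key: "\<And>y. y \<in> conj_class G x \<Longrightarrow> (y [^] r) [^] s = y \<otimes> ?z"
    proof -
      fix y assume "y \<in> conj_class G x"
      then obtain g where g: "g \<in> carrier G" and y: "y = g \<otimes> x \<otimes> inv g"
        unfolding conj_class_def by auto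
      have "(y [^] r) [^] s = y [^] (r * s)" using y g x by (simp add: nat_pow_pow)
      also have "\<dots> = g \<otimes> x [^] (1 + m * k) \<otimes> inv g" unfolding y rs' by (rule conj_pow[OF g x])
      also have "\<dots> = g \<otimes> (x \<otimes> ?z) \<otimes> inv g" using nat_pow_Suc2[OF x, of "m * k"] by (simp only: plus_1_eq_Suc)
      also have "\<dots> = g \<otimes> x \<otimes> (?z \<otimes> inv g)" using x g by (simp add: m_assoc)
      also have "\<dots> = g \<otimes> x \<otimes> (inv g \<otimes> ?z)" using central[of "inv g" k] g by simp
      also have "\<dots> = y \<otimes> ?z" using y x g by (simp add: m_assoc)
      finally show "(y [^] r) [^] s = y \<otimes> ?z" .
    qed
    show ?thesis
    proof (rule inj_onI)
      fix y w assume y: "y \<in> conj_class G x" and w: "w \<in> conj_class G x" and e: "y [^] r = w [^] r"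
      have "y \<otimes> ?z = (y [^] r) [^] s" by (rule key[OF y, symmetric])
      also have "\<dots> = (w [^] r) [^] s" using e by simp
      also have "\<dots> = w \<otimes> ?z" by (rule key[OF w])
      finally have "y \<otimes> ?z = w \<otimes> ?z" .
      moreover have "y \<in> carrier G" "w \<in> carrier G" using y w conj_class_sub[OF x] by auto
      ultimately show "y = w" using right_cancel[of ?z y w] x by simp
    qed
  qed
  have "bij_betw (\<lambda>y. y [^] r) (conj_class G x) (conj_class G (x [^] r))"
    using inj surj by (simp add: bij_betw_def)
  then have "conj_class G x \<approx> conj_class G (x [^] r)" unfolding eqpoll_def by blast
  then show ?thesis by (rule eqpoll_sym)
qed

end
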